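(* Let $\mathcal C$ be a finite set of vectors in $\mathbb R^N$. Let $\{x_n\}\subset\mathbb R^N_{>0}$ be a partially monotonic sequence such that $\lim_{n\to\infty}x_{n,i}\in\{0,\infty\}$ for at least one $i\in\{1,\dots,N\}$. Let $U=\{i:\lim_{n\to\infty}x_{n,i}=0\}$ and $V=\{j:\lim_{n\to\infty}x_{n,j}=\infty\}$. Suppose $\mathcal C$ is partitioned along $\{x_n\}$ with tiers $T_1,\dots,T_P$ and some constant $C$. Then there exists a conservation relation $w\in\mathbb R^N$ that respects the triple $(U,V,\{T_i\})$.
   Context: For $u\in\mathbb R^N_{\ge0}$, $v\in\mathbb R^N$, $u^v=u_1^{v_1}\cdots u_N^{v_N}$ (with $0^0=1$). A partition of $\mathcal C$ is a collection of nonempty pairwise disjoint subsets with union $\mathcal C$. $\mathcal C$ is partitioned along $\{x_n\}$ if there exist a partition $\{T_i\}_{i=1}^P$ of $\mathcal C$ (tiers) and a constant $C>1$ such that (i) if $y_j,y_k\in T_i$ then $\frac1C x_n^{y_j}\le x_n^{y_k}\le Cx_n^{y_j}$ for all $n$, and (ii) if $y_j\in T_i$, $y_k\in T_{i+m}$ with $m\ge1$, then $x_n^{y_j}/x_n^{y_k}\to\infty$ as $n\to\infty$. A sequence $\{x_n\}\subset\mathbb R^N_{>0}$ is partially monotonic if $x_{n,i}\ge x_{n+1,i}$ for all $n$ for each $i$ with $\liminf_n x_{n,i}=0$, and $x_{n,j}\le x_{n+1,j}$ for all $n$ for each $j$ with $\limsup_n x_{n,j}=\infty$. The positive support of $w\in\mathbb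 R^N$ is $\{i:w_i>0\}$, the negative support is $\{i:w_i<0\}$. For $U,V\subset\{1,\dots,N\}$ with $U\cup V$ nonempty, $w\in\mathbb R^N$ is a conservation relation that respects the triple $(U,V,\{T_i\})$ if $U$ is exactly the positive support of $w$, $V$ is exactly the negative support of $w$, and $w\cdot(y_j-y_\ell)=0$ whenever $y_j,y_\ell$ lie in the same tier $T_i$. *)

theory Defs
  imports "HOL-Analysis.Analysis"
begin

definition monpow :: "real^'n \<Rightarrow> real^'n \<Rightarrow> real" where
  "monpow u v = (\<Prod>i\<in>UNIV. if u $ i = 0 then (if v $ i = 0 then 1 else 0) else (u $ i) powr (v $ i))"

text \<open>Tiers are indexed 0..<P (paper: 1..P), in the given order.\<close>
definition is_partition_idx :: "nat \<Rightarrow> (nat \<Rightarrow> 'a set) \<Rightarrow> 'a set \<Rightarrow> bool" where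
  "is_partition_idx P T C \<longleftrightarrow>
     (\<forall>i<P. T i \<noteq> {}) \<and>
     (\<forall>i<P. \<forall>j<P. i \<noteq> j \<longrightarrow> T i \<inter> T j = {}) \<and>
     (\<Union>i<P. T i) = C"

definition partitioned_along_with ::
  "(real^'n) set \<Rightarrow> (nat \<Rightarrow> real^'n) \<Rightarrow> nat \<Rightarrow> (nat \<Rightarrow> (real^'n) set) \<Rightarrow> real \<Rightarrow> bool" where
  "partitioned_along_with C x P T K \<longleftrightarrow>
     is_partition_idx P T C \<and> K > 1 \<and>
     (\<forall>i<P. \<forall>yj\<in>T i. \<forall>yk\<in>T i. \<forall>n.
        monpow (x n) yj / K \<le> monpow (x n) yk \<and> monpow (x n) yk \<le> K * monpow (x n) yj) \<and>
     (\<forall>i m. m \<ge> 1 \<longrightarrow> i + m < P \<longrightarrow> (\<forall>yj\<in>T i. \<forall>yk\<in>T (i + m).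
        filterlim (\<lambda>n. monpow (x n) yj / monpow (x n) yk) at_top sequentially))"

definition partially_monotonic :: "(nat \<Rightarrow> real^'n) \<Rightarrow> bool" where
  "partially_monotonic x \<longleftrightarrow>
     (\<forall>i. liminf (\<lambda>n. ereal (x n $ i)) = 0 \<longrightarrow> (\<forall>n. x n $ i \<ge> x (Suc n) $ i)) \<and>
     (\<forall>j. limsup (\<lambda>n. ereal (x n $ j)) = \<infinity> \<longrightarrow> (\<forall>n. x n $ j \<le> x (Suc n) $ j))"

definition respects_conservation ::
  "real^'n \<Rightarrow> 'n set \<Rightarrow> 'n set \<Rightarrow> nat \<Rightarrow> (nat \<Rightarrow> (real^'n) set) \<Rightarrow> bool" where
  "respects_conservation w U V P T \<longleftrightarrow>
     U \<union> V \<noteq> {} \<and>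
     {i. w $ i > 0} = U \<and> {i. w $ i < 0} = V \<and>
     (\<forall>i<P. \<forall>yj\<in>T i. \<forall>yl\<in>T i. inner w (yj - yl) = 0)"

end

theory Submission
  imports Defs
begin
lemma monpow_exp:
  fixes u v :: "real^'n"
  assumes "\<forall>i. u $ i > 0"
  shows "monpow u v = exp (inner v (\<chi> i. ln (u $ i)))"
proof -
  have "monpow u v = (\<Prod>i\<in>UNIV. exp (v $ i * ln (u $ i)))"
    unfolding monpow_def using assms by (intro prod.cong) (auto simp: powr_def less_imp_neq[symmetric] dest: spec[of _ i for i])
  also have "\<dots> = exp (\<Sum>i\<in>UNIV. v $ i * ln (u $ i))" by (simp add: exp_sum)
  finally show ?thesis by (simp add: inner_vec_def)
qed

lemma tier_bound:
  fixes a b K :: real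
  assumes "K > 1" "exp a / K \<le> exp b" "exp b \<le> K * exp a"
  shows "\<bar>a - b\<bar> \<le> ln K"
proof -
  have "exp (a - ln K) = exp a / K" using assms by (simp add: exp_diff)
  with assms have 1: "a - ln K \<le> b" by (metis exp_le_cancel_iff)
  have "exp (ln K + a) = K * exp a" using assms by (simp add: exp_add)
  with assms have 2: "b \<le> ln K + a" by (metis exp_le_cancel_iff)
  from 1 2 show ?thesis by linarith
qed

lemma coord_bounded:
  fixes x :: "nat \<Rightarrow> real^'n"
  assumes pos: "\<forall>n i. x n $ i > 0" and pm: "partially_monotonic x"
    and nU: "\<not> (\<lambda>n. x n $ i) \<longlonglongrightarrow> 0"
    and nV: "\<not> filterlim (\<lambda>n. x n $ i) at_top sequentially"
  shows "\<exists>M. eventually (\<lambda>n. \<bar>ln (x n $ i)\<bar> \<le> M) sequentially"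
proof -
  define f where "f = (\<lambda>n. ereal (x n $ i))"
  have li: "liminf f \<noteq> 0"
  proof
    assume h: "liminf f = 0"
    then have "\<forall>n. x n $ i \<ge> x (Suc n) $ i" using pm unfolding partially_monotonic_def f_def by blast
    then have "antimono_on UNIV f" unfolding f_def by (intro decseq_SucI) simp
    then have t: "f \<longlonglongrightarrow> Inf (range f)" by (rule LIMSEQ_INF)
    then have "liminf f = Inf (range f)" by (intro lim_imp_Liminf) auto
    with t h have "f \<longlonglongrightarrow> ereal 0" by (simp add: zero_ereal_def)
    then have "(\<lambda>n. x n $ i) \<longlonglongrightarrow> 0" unfolding f_def by (simp only: lim_ereal)
    with nU show False by simp
  qed
  have "0 \<le> liminf f" unfolding f_def using pos
    by (intro Liminf_bounded) (auto simp: less_imp_le)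
  with li have "0 < liminf f" by simp
  then obtain r where r: "0 < ereal r" "ereal r < liminf f" using ereal_dense2 by blast
  have ev1: "eventually (\<lambda>n. r < x n $ i) sequentially"
    using less_LiminfD[OF r(2)] unfolding f_def by simp
  have ls: "limsup f \<noteq> \<infinity>"
  proof
    assume h: "limsup f = \<infinity>"
    then have "\<forall>n. x n $ i \<le> x (Suc n) $ i" using pm unfolding partially_monotonic_def f_def by blast
    then have "incseq f" unfolding f_def by (intro incseq_SucI) simp
    then have t: "f \<longlonglongrightarrow> Sup (range f)" by (rule LIMSEQ_SUP)
    then have "limsup f = Sup (range f)" by (intro lim_imp_Limsup) auto
    with t h have "f \<longlonglongrightarrow> \<infinity>" by simp
    then have "\<forall>R. eventually (\<lambda>n. ereal R < f n) sequentially" by (simp add: tendsto_PInfty)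
    then have "filterlim (\<lambda>n. x n $ i) at_top sequentially"
      unfolding filterlim_at_top f_def by (metis (mono_tags, lifting) eventually_mono less_imp_le ereal_less_eq(3))
    with nV show False by simp
  qed
  then have "limsup f < \<infinity>" using less_ereal.simps(3) by (simp add: top.not_eq_extremum)
  then obtain R where R: "limsup f < ereal R" using ereal_dense2 by blast
  have ev2: "eventually (\<lambda>n. x n $ i < R) sequentially"
    using Limsup_lessD[OF R] unfolding f_def by simp
  have "eventually (\<lambda>n. \<bar>ln (x n $ i)\<bar> \<le> max \<bar>ln r\<bar> \<bar>ln R\<bar>) sequentially"
    using ev1 ev2
  proof eventually_elim
    case (elim n)
    have "r > 0" using r by simp
    then have "ln r < ln (x n $ i)" "ln (x n $ i) < ln R" using elim by auto
    then show ?case by linarith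
  qed
  then show ?thesis by blast
qed

theorem mainTheorem3:
  fixes C :: "(real^'n) set" and x :: "nat \<Rightarrow> real^'n"
    and P :: nat and T :: "nat \<Rightarrow> (real^'n) set" and K :: real
    and U V :: "'n set"
  assumes "finite C"
    and "\<forall>n i. x n $ i > 0"
    and "partially_monotonic x"
    and "\<exists>i. (\<lambda>n. x n $ i) \<longlonglongrightarrow> 0 \<or> filterlim (\<lambda>n. x n $ i) at_top sequentially"
    and "U = {i. (\<lambda>n. x n $ i) \<longlonglongrightarrow> 0}"
    and "V = {j. filterlim (\<lambda>n. x n $ j) at_top sequentially}"
    and "partitioned_along_with C x P T K"
  shows "\<exists>w :: real^'n. respects_conservation w U V P T"
proof -
  note pos = assms(2) and pm = assms(3) and Ud = assms(5) and Vd = assms(6)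
  have K1: "K > 1" and tiers: "\<forall>i<P. \<forall>yj\<in>T i. \<forall>yk\<in>T i. \<forall>n.
        monpow (x n) yj / K \<le> monpow (x n) yk \<and> monpow (x n) yk \<le> K * monpow (x n) yj"
    using assms(7) unfolding partitioned_along_with_def by auto
  define L where "L = (\<lambda>n. \<chi> i. ln (x n $ i) :: real^'n)"
  define S where "S = U \<union> V"
  have UV: "U \<inter> V = {}"
  proof (rule ccontr)
    assume "U \<inter> V \<noteq> {}"
    then obtain i where "(\<lambda>n. x n $ i) \<longlonglongrightarrow> 0" "filterlim (\<lambda>n. x n $ i) at_top sequentially"
      using Ud Vd by auto
    then show False using not_tendsto_and_filterlim_at_infinity filterlim_at_top_imp_at_infinity
      by (metis trivial_limit_sequentially)
  qed
  have Sne: "S \<noteq> {}" using assms(4) Ud Vd S_def by auto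
  define sg where "sg = (\<lambda>i. if i \<in> V then -1 else (1::real))"
  define sd where "sd = (\<lambda>v::real^'n. \<chi> i. sg i * v $ i)"
  have lin: "linear sd"
    by (rule linearI) (auto simp: sd_def vec_eq_iff algebra_simps)
  define Dset where "Dset = {yj - yl | yj yl. \<exists>i<P. yj \<in> T i \<and> yl \<in> T i}"
  define ax where "ax = (\<lambda>i. axis i (1::real) :: real^'n)"
  define E where "E = span (sd ` Dset \<union> ax ` (- S))"
  define Dl where "Dl = convex hull (ax ` S)"
  have bnd: "\<exists>B. \<forall>n. \<bar>inner d (L n)\<bar> \<le> B" if "d \<in> span Dset" for d
    using that
  proof (rule span_induct)
    show "subspace {d. \<exists>B. \<forall>n. \<bar>inner d (L n)\<bar> \<le> B}"
      unfolding subspace_def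
    proof safe
      show "\<exists>B. \<forall>n. \<bar>inner 0 (L n)\<bar> \<le> B" by auto
    next
      fix a b B1 B2 assume "\<forall>n. \<bar>inner a (L n)\<bar> \<le> B1" "\<forall>n. \<bar>inner b (L n)\<bar> \<le> B2"
      then have "\<forall>n. \<bar>inner (a + b) (L n)\<bar> \<le> B1 + B2"
        by (simp add: inner_add_left) (metis abs_triangle_ineq add_mono order_trans)
      then show "\<exists>B. \<forall>n. \<bar>inner (a + b) (L n)\<bar> \<le> B" by blast
    next
      fix c a B assume h: "\<forall>n. \<bar>inner a (L n)\<bar> \<le> B"
      have "\<forall>n. \<bar>inner (c *\<^sub>R a) (L n)\<bar> \<le> \<bar>c\<bar> * B"
        using h by (simp add: abs_mult mult_left_mono)
      then show "\<exists>B. \<forall>n. \<bar>inner (c *\<^sub>R a) (L n)\<bar> \<le> B" by blast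
    qed
  next
    fix d assume "d \<in> Dset"
    then obtain yj yl i where d: "d = yj - yl" "i < P" "yj \<in> T i" "yl \<in> T i"
      unfolding Dset_def by blast
    have "\<forall>n. \<bar>inner d (L n)\<bar> \<le> ln K"
    proof
      fix n
      have mp: "\<And>y. monpow (x n) y = exp (inner y (L n))"
        using pos unfolding L_def by (simp add: monpow_exp)
      have "\<bar>inner yj (L n) - inner yl (L n)\<bar> \<le> ln K"
        using tiers[rule_format, OF d(2) d(3) d(4), of n] K1 by (intro tier_bound) (auto simp: mp)
      then show "\<bar>inner d (L n)\<bar> \<le> ln K" using d by (simp add: inner_diff_left)
    qed
    then show "\<exists>B. \<forall>n. \<bar>inner d (L n)\<bar> \<le> B" by blast
  qed
  have "\<forall>i. \<exists>M. i \<notin> S \<longrightarrow> eventually (\<lambda>n. \<bar>L n $ i\<bar> \<le> M) sequentially"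
    using coord_bounded[OF pos pm] unfolding L_def S_def Ud Vd by auto
  then obtain M where M: "\<And>i. i \<notin> S \<Longrightarrow> eventually (\<lambda>n. \<bar>L n $ i\<bar> \<le> M i) sequentially"
    by metis
  have LU: "filterlim (\<lambda>n. L n $ i) at_bot sequentially" if "i \<in> U" for i
  proof -
    have "filterlim (\<lambda>n. x n $ i) (at_right 0) sequentially"
      using that pos Ud by (intro tendsto_imp_filterlim_at_right) auto
    then show ?thesis unfolding L_def by (simp add: filterlim_compose[OF ln_at_0])
  qed
  have LV: "filterlim (\<lambda>n. L n $ i) at_top sequentially" if "i \<in> V" for i
    using that Vd unfolding L_def by (simp add: filterlim_compose[OF ln_at_top])
  have disj: "E \<inter> Dl = {}"
  proof (rule ccontr)
    assume "E \<inter> Dl \<noteq> {}"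
    then obtain z where zE: "z \<in> E" and zD: "z \<in> Dl" by blast
    have finA: "finite (ax ` S)" by simp
    obtain u where u: "\<forall>y\<in>ax ` S. 0 \<le> u y" "sum u (ax ` S) = 1"
      "(\<Sum>y\<in>ax ` S. u y *\<^sub>R y) = z"
      using zD unfolding Dl_def convex_hull_finite[OF finA] by blast
    have zc: "z $ j = (\<Sum>y\<in>ax ` S. u y * y $ j)" for j
      using u(3)[symmetric] by (simp add: sum_component)
    have axc: "ax i $ j = (if j = i then 1 else 0)" for i j by (simp add: ax_def axis_def)
    have znn: "z $ j \<ge> 0" for j
      unfolding zc using u(1) by (intro sum_nonneg) (auto simp: axc)
    obtain y0 where y0: "y0 \<in> ax ` S" "u y0 > 0"
    proof (rule ccontr)
      assume "\<not> thesis"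
      with that have "\<forall>y\<in>ax ` S. u y = 0" using u(1) by force
      then have "sum u (ax ` S) = 0" by (intro sum.neutral) blast
      then show False using u(2) by simp
    qed
    then obtain i0 where i0: "i0 \<in> S" "y0 = ax i0" by blast
    have zi0: "z $ i0 > 0"
    proof -
      have "u y0 * y0 $ i0 \<le> z $ i0"
        unfolding zc using u(1) y0 by (intro member_le_sum) (auto simp: axc)
      then show ?thesis using y0 i0 by (simp add: axc)
    qed
    obtain p q where pq: "z = p + q" "p \<in> span (sd ` Dset)" "q \<in> span (ax ` (- S))"
      using zE unfolding E_def span_Un by blast
    obtain d where d: "d \<in> span Dset" "p = sd d"
      using pq(2) span_linear_image[OF lin] by auto
    have q0: "q $ j = 0" if "j \<in> S" for j
      using pq(3)
    proof (rule span_induct)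
      show "subspace {v::real^'n. v $ j = 0}" unfolding subspace_def by auto
    next
      fix v assume "v \<in> ax ` (- S)"
      then show "v $ j = 0" using that by (auto simp: axc)
    qed
    have zd: "z $ j = sg j * d $ j" if "j \<in> S" for j
      using q0[OF that] pq(1) d(2) by (simp add: sd_def)
    obtain B where B: "\<forall>n. \<bar>inner d (L n)\<bar> \<le> B" using bnd[OF d(1)] by blast
    define f where "f = (\<lambda>i n. d $ i * L n $ i)"
    define c where "c = (\<lambda>i. if i \<in> S then 0 else \<bar>d $ i\<bar> * \<bar>M i\<bar>)"
    define Cs where "Cs = (\<Sum>i\<in>UNIV. c i)"
    have c0: "c i \<ge> 0" for i by (simp add: c_def)
    have evc: "eventually (\<lambda>n. \<forall>i. f i n \<le> c i) sequentially"
    proof (rule eventually_all_finite)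
      fix i
      show "eventually (\<lambda>n. f i n \<le> c i) sequentially"
      proof (cases "i \<in> V")
        case True
        then have "d $ i \<le> 0" using zd[of i] znn[of i] S_def by (simp add: sg_def)
        moreover have "eventually (\<lambda>n. 0 \<le> L n $ i) sequentially"
          using LV[OF True] unfolding filterlim_at_top by blast
        ultimately show ?thesis using True
          by (auto simp: f_def c_def S_def elim!: eventually_mono intro: mult_nonpos_nonneg)
      next
        case nV: False
        show ?thesis
        proof (cases "i \<in> U")
          case True
          then have "d $ i \<ge> 0" using zd[of i] znn[of i] nV S_def by (simp add: sg_def)
          moreover have "eventually (\<lambda>n. L n $ i \<le> 0) sequentially"
            using LU[OF True] unfolding filterlim_at_bot by blast
          ultimately show ?thesis using True
            by (auto simp: f_def c_def S_def elim!: eventually_mono intro: mult_nonneg_nonpos)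
        next
          case False
          then have "i \<notin> S" using nV S_def by auto
          have nS: "i \<notin> S" by fact
          show ?thesis using M[OF nS]
          proof (elim eventually_mono)
            fix n assume "\<bar>L n $ i\<bar> \<le> M i"
            then have "\<bar>f i n\<bar> \<le> \<bar>d $ i\<bar> * \<bar>M i\<bar>"
              by (simp add: f_def abs_mult mult_left_mono)
            then show "f i n \<le> c i" using \<open>i \<notin> S\<close> by (simp add: c_def)
          qed
        qed
      qed
    qed
    have ev0: "eventually (\<lambda>n. f i0 n \<le> -(B + Cs + 1)) sequentially"
    proof (cases "i0 \<in> V")
      case True
      then have dn: "d $ i0 < 0" using zd[of i0] zi0 i0 by (simp add: sg_def)
      have "eventually (\<lambda>n. (B + Cs + 1) / (- d $ i0) \<le> L n $ i0) sequentially"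
        using LV[OF True] unfolding filterlim_at_top by blast
      then show ?thesis
      proof (elim eventually_mono)
        fix n assume h: "(B + Cs + 1) / (- d $ i0) \<le> L n $ i0"
        have "0 < - d $ i0" using dn by simp
        then have "B + Cs + 1 \<le> L n $ i0 * (- d $ i0)"
          using h pos_divide_le_eq[of "- d $ i0" "B + Cs + 1" "L n $ i0"] by blast
        then have "B + Cs + 1 \<le> (- d $ i0) * L n $ i0" by (simp add: mult.commute)
        then show "f i0 n \<le> -(B + Cs + 1)" by (simp add: f_def)
      qed
    next
      case False
      then have "i0 \<in> U" using i0 S_def by auto
      have dp: "d $ i0 > 0" using zd[of i0] zi0 i0 False by (simp add: sg_def)
      have "eventually (\<lambda>n. L n $ i0 \<le> -(B + Cs + 1) / d $ i0) sequentially"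
        using LU[OF \<open>i0 \<in> U\<close>] unfolding filterlim_at_bot by blast
      then show ?thesis
      proof (elim eventually_mono)
        fix n assume h: "L n $ i0 \<le> -(B + Cs + 1) / d $ i0"
        have "d $ i0 * L n $ i0 \<le> -(B + Cs + 1)"
          using h dp by (simp add: le_divide_eq mult.commute)
        then show "f i0 n \<le> -(B + Cs + 1)" by (simp add: f_def)
      qed
    qed
    obtain n where n1: "\<forall>i. f i n \<le> c i" and n2: "f i0 n \<le> -(B + Cs + 1)"
    proof -
      from eventually_conj[OF evc ev0] obtain N where
        "\<forall>n\<ge>N. (\<forall>i. f i n \<le> c i) \<and> f i0 n \<le> -(B + Cs + 1)"
        unfolding eventually_sequentially by blast
      then show ?thesis using that by blast
    qed
    have "inner d (L n) = (\<Sum>i\<in>UNIV. f i n)" by (simp add: inner_vec_def f_def)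
    also have "\<dots> = f i0 n + (\<Sum>i\<in>UNIV - {i0}. f i n)" by (simp add: sum.remove)
    also have "(\<Sum>i\<in>UNIV - {i0}. f i n) \<le> (\<Sum>i\<in>UNIV - {i0}. c i)"
      using n1 by (intro sum_mono) auto
    also have "(\<Sum>i\<in>UNIV - {i0}. c i) \<le> Cs"
      unfolding Cs_def using c0 by (intro sum_mono2) auto
    finally have "inner d (L n) \<le> f i0 n + Cs" by simp
    with n2 B show False by (smt (verit))
  qed
  have "subspace E" unfolding E_def by (rule subspace_span)
  moreover have "convex Dl" "compact Dl" "Dl \<noteq> {}"
    unfolding Dl_def using Sne compact_convex_hull[OF finite_imp_compact[of "ax ` S"]] by auto
  ultimately obtain a b where ab: "\<forall>e\<in>E. inner a e < b" "\<forall>z\<in>Dl. b < inner a z"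
    using separating_hyperplane_closed_compact[of E Dl] disj
    by (meson closed_subspace subspace_imp_convex)
  have aE: "inner a e = 0" if "e \<in> E" for e
  proof (rule ccontr)
    assume ne: "inner a e \<noteq> 0"
    have "((b + 1) / inner a e) *\<^sub>R e \<in> E" using that \<open>subspace E\<close> by (simp add: subspace_scale)
    then have "inner a (((b + 1) / inner a e) *\<^sub>R e) < b" using ab by blast
    then show False using ne by simp
  qed
  have b0: "0 < b" using ab(1) \<open>subspace E\<close> by (metis inner_zero_right subspace_0)
  have apos: "a $ i > 0" if "i \<in> S" for i
  proof -
    have "ax i \<in> Dl" unfolding Dl_def using that by (intro hull_inc) auto
    then have "b < inner a (ax i)" using ab by blast
    then show ?thesis using b0 by (simp add: ax_def inner_axis)
  qed
  have azero: "a $ i = 0" if "i \<notin> S" for i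
  proof -
    have "ax i \<in> E" unfolding E_def using that by (intro span_base) auto
    then have "inner a (ax i) = 0" by (rule aE)
    then show ?thesis by (simp add: ax_def inner_axis)
  qed
  define w where "w = (\<chi> i. sg i * a $ i)"
  have "respects_conservation w U V P T"
    unfolding respects_conservation_def
  proof (intro conjI)
    show "U \<union> V \<noteq> {}" using Sne S_def by simp
    show "{i. w $ i > 0} = U"
    proof safe
      fix i assume "0 < w $ i"
      then show "i \<in> U" using apos[of i] azero[of i] UV
        by (cases "i \<in> V"; cases "i \<in> S") (auto simp: w_def sg_def S_def)
    next
      fix i assume "i \<in> U"
      then show "0 < w $ i" using apos[of i] UV by (auto simp: w_def sg_def S_def)
    qed
    show "{i. w $ i < 0} = V"
    proof safe
      fix i assume "w $ i < 0"
      then show "i \<in> V" using apos[of i] azero[of i] UV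
        by (cases "i \<in> V"; cases "i \<in> S") (auto simp: w_def sg_def S_def)
    next
      fix i assume "i \<in> V"
      then show "w $ i < 0" using apos[of i] by (auto simp: w_def sg_def S_def)
    qed
    show "\<forall>i<P. \<forall>yj\<in>T i. \<forall>yl\<in>T i. inner w (yj - yl) = 0"
    proof (intro allI impI ballI)
      fix i yj yl assume h: "i < P" "yj \<in> T i" "yl \<in> T i"
      then have "yj - yl \<in> Dset" unfolding Dset_def by blast
      then have "sd (yj - yl) \<in> E" unfolding E_def by (intro span_base) auto
      then have "inner a (sd (yj - yl)) = 0" by (rule aE)
      moreover have "inner w (yj - yl) = inner a (sd (yj - yl))"
        by (simp add: inner_vec_def w_def sd_def algebra_simps)
      ultimately show "inner w (yj - yl) = 0" by simp
    qed
  qed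
  then show ?thesis by blast
qed

end
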